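(* Let $K$ be either an $N$-gon or a star-like tree, with $N$ vertices, and let $z\in\mathbb{R}^N$ be such that the persistence diagram $\mathrm{PH}_0(z)=\{(p_m^b,p_m^d)\}_{m=1}^M$ is typical. Then there is a typical point $z'\in\mathbb{R}^N$ with $\mathrm{PH}_0(z')=\mathrm{PH}_0(z)$.
   Context: The $N$-gon has vertices $\mathbb{Z}/N$ and edges $[i,i+1]$. A star-like tree is a tree with a central vertex of degree $n$ which is the union of $n$ paths (branches) of length at least $2$ meeting only at the central vertex. Vertices of $K$ are labelled $1,\dots,N$, and $z\in\mathbb{R}^N$ is viewed as a function on vertices extended to edges by the maximum over endpoints. $K_r(z)$ is the subcomplex of vertices $i$ with $z_i\le r$ and edges $[i,j]$ with $\max\{z_i,z_j\}\le r$; $\mathrm{PH}_0(z)$ is the degree-$0$ persistence diagram (multiset of (birth, death) pairs, death possibly $\infty$) of the filtration $r\mapsto K_r(z)$. A persistence diagram is typical if the (finite) coordinates of its points are pairwise distinct; a point $z\in\mathbb{R}^N$ is typical if its coordinates are pairwise distinct. *)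

theory Defs
  imports Complex_Main "HOL-Library.Multiset" "HOL-Library.Extended_Real"
begin

text \<open>A graph (1-dimensional simplicial complex) is given by its vertex set V
  and its edge set E (a set of 2-element vertex sets).\<close>

definition ngon_edges :: "nat \<Rightarrow> nat set set" where
  "ngon_edges N = {{i, i + 1} | i. 1 \<le> i \<and> i < N} \<union> {{N, 1}}"

definition is_ngon :: "nat \<Rightarrow> nat set set \<Rightarrow> bool" where
  "is_ngon N E \<longleftrightarrow> N \<ge> 3 \<and> E = ngon_edges N"

text \<open>Edges of the path c - b!0 - b!1 - ... - b!(k-1).\<close>
definition branch_edges :: "nat \<Rightarrow> nat list \<Rightarrow> nat set set" where
  "branch_edges c b = set (map2 (\<lambda>u v. {u, v}) (c # b) b)"

text \<open>Star-like tree on vertices 1..N: centre c, branches bs (each a path of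
  length (number of edges) at least 2 starting at c), meeting only at c.\<close>
definition is_starlike :: "nat \<Rightarrow> nat set set \<Rightarrow> bool" where
  "is_starlike N E \<longleftrightarrow> (\<exists>c bs.
     c \<in> {1..N} \<and>
     (\<forall>b\<in>set bs. length b \<ge> 2 \<and> distinct b \<and> c \<notin> set b) \<and>
     (\<forall>i<length bs. \<forall>j<length bs. i \<noteq> j \<longrightarrow> set (bs ! i) \<inter> set (bs ! j) = {}) \<and>
     {1..N} = insert c (\<Union>b\<in>set bs. set b) \<and>
     E = (\<Union>b\<in>set bs. branch_edges c b))"

text \<open>Sublevel subcomplex: vertices / edges whose (max of) values satisfy P
  (P = (\<lambda>x. x \<le> r) gives K_r; P = (\<lambda>x. x < r) gives the union of K_s, s < r).\<close>
definition sub_V :: "nat set \<Rightarrow> (nat \<Rightarrow> real) \<Rightarrow> (real \<Rightarrow> bool) \<Rightarrow> nat set" where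
  "sub_V V z P = {v \<in> V. P (z v)}"

definition sub_E :: "nat set set \<Rightarrow> (nat \<Rightarrow> real) \<Rightarrow> (real \<Rightarrow> bool) \<Rightarrow> nat set set" where
  "sub_E E z P = {e \<in> E. \<forall>v\<in>e. P (z v)}"

definition comp :: "nat set set \<Rightarrow> (nat \<Rightarrow> real) \<Rightarrow> (real \<Rightarrow> bool) \<Rightarrow> nat \<Rightarrow> nat set" where
  "comp E z P v = {w. (v, w) \<in> {(a, b). {a, b} \<in> sub_E E z P}\<^sup>*}"

text \<open>Rank of the map H_0(K_P) \<rightarrow> H_0(K_Q) induced by inclusion (P implies Q):
  number of components of K_Q meeting K_P.\<close>
definition rk :: "nat set \<Rightarrow> nat set set \<Rightarrow> (nat \<Rightarrow> real) \<Rightarrow> (real \<Rightarrow> bool) \<Rightarrow> (real \<Rightarrow> bool) \<Rightarrow> int" where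
  "rk V E z P Q = int (card (comp E z Q ` sub_V V z P))"

text \<open>Multiplicity of the finite point (b,d), b < d, in PH_0 (inclusion-exclusion
  of ranks of the persistence module).\<close>
definition mult_fin :: "nat set \<Rightarrow> nat set set \<Rightarrow> (nat \<Rightarrow> real) \<Rightarrow> real \<Rightarrow> real \<Rightarrow> int" where
  "mult_fin V E z b d =
     rk V E z (\<lambda>x. x \<le> b) (\<lambda>x. x < d) - rk V E z (\<lambda>x. x < b) (\<lambda>x. x < d)
   - rk V E z (\<lambda>x. x \<le> b) (\<lambda>x. x \<le> d) + rk V E z (\<lambda>x. x < b) (\<lambda>x. x \<le> d)"

definition mult_inf :: "nat set \<Rightarrow> nat set set \<Rightarrow> (nat \<Rightarrow> real) \<Rightarrow> real \<Rightarrow> int" where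
  "mult_inf V E z b =
     rk V E z (\<lambda>x. x \<le> b) (\<lambda>x. True) - rk V E z (\<lambda>x. x < b) (\<lambda>x. True)"

text \<open>Degree-0 persistence diagram of the sublevel filtration r \<mapsto> K_r(z)
  (off-diagonal points, as a multiset; all coordinates are values of z).\<close>
definition PH0 :: "nat set \<Rightarrow> nat set set \<Rightarrow> (nat \<Rightarrow> real) \<Rightarrow> (real \<times> ereal) multiset" where
  "PH0 V E z =
     (\<Sum>b\<in>z ` V. \<Sum>d\<in>z ` V.
        if b < d then replicate_mset (nat (mult_fin V E z b d)) (b, ereal d) else {#})
   + (\<Sum>b\<in>z ` V. replicate_mset (nat (mult_inf V E z b)) (b, PInfty))"

definition diag_coords :: "(real \<times> ereal) multiset \<Rightarrow> real multiset" where
  "diag_coords D = (\<Sum>p\<in>#D. {#fst p#} +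
      (if snd p = PInfty then {#} else {#real_of_ereal (snd p)#}))"

definition typical_diagram :: "(real \<times> ereal) multiset \<Rightarrow> bool" where
  "typical_diagram D \<longleftrightarrow> (\<forall>x. count (diag_coords D) x \<le> 1)"

definition typical_point :: "nat \<Rightarrow> (nat \<Rightarrow> real) \<Rightarrow> bool" where
  "typical_point N z \<longleftrightarrow> inj_on z {1..N}"

end

theory Submission
  imports Defs
begin

definition rel :: "nat set set \<Rightarrow> nat set \<Rightarrow> (nat \<times> nat) set" where
  "rel E U = {(a,b). {a,b} \<in> E \<and> a \<in> U \<and> b \<in> U}"

definition cc :: "nat set set \<Rightarrow> nat set \<Rightarrow> nat \<Rightarrow> nat set" where
  "cc E U a = {w. (a,w) \<in> (rel E U)\<^sup>*}"

definition rkS :: "nat set set \<Rightarrow> nat set \<Rightarrow> nat set \<Rightarrow> int" where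
  "rkS E A B = int (card (cc E B ` A))"

lemma rel_sym: "(a,b) \<in> rel E U \<Longrightarrow> (b,a) \<in> rel E U"
  unfolding rel_def by (simp add: insert_commute)

lemma rtr_sym: "(a,b) \<in> (rel E U)\<^sup>* \<Longrightarrow> (b,a) \<in> (rel E U)\<^sup>*"
proof (induction rule: rtrancl_induct)
  case base then show ?case by simp
next
  case (step y z) then show ?case
    by (meson converse_rtrancl_into_rtrancl rel_sym)
qed

lemma rel_mono: "U \<subseteq> U' \<Longrightarrow> rel E U \<subseteq> rel E U'"
  by (auto simp: rel_def)

lemma rtr_mono: "U \<subseteq> U' \<Longrightarrow> (a,b) \<in> (rel E U)\<^sup>* \<Longrightarrow> (a,b) \<in> (rel E U')\<^sup>*"
  using rel_mono[of U U' E] rtrancl_mono by blast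

lemma cc_eq_iff: "cc E U a = cc E U b \<longleftrightarrow> (a,b) \<in> (rel E U)\<^sup>*"
proof
  assume "cc E U a = cc E U b"
  then have "b \<in> cc E U a" by (simp add: cc_def)
  then show "(a,b) \<in> (rel E U)\<^sup>*" by (simp add: cc_def)
next
  assume h: "(a,b) \<in> (rel E U)\<^sup>*"
  then have "(b,a) \<in> (rel E U)\<^sup>*" by (rule rtr_sym)
  show "cc E U a = cc E U b" unfolding cc_def
  proof (intro set_eqI iffI; simp)
    fix x assume "(a,x) \<in> (rel E U)\<^sup>*"
    with \<open>(b,a) \<in> (rel E U)\<^sup>*\<close> show "(b,x) \<in> (rel E U)\<^sup>*" by (rule rtrancl_trans)
  next
    fix x assume "(b,x) \<in> (rel E U)\<^sup>*"
    with h show "(a,x) \<in> (rel E U)\<^sup>*" by (rule rtrancl_trans)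
  qed
qed

lemma rel_V: "\<forall>e\<in>E. e \<subseteq> V \<Longrightarrow> rel E U = rel E (V \<inter> U)"
  by (auto simp: rel_def)

lemma comp_cc: "comp E z P a = cc E {u. P (z u)} a"
proof -
  have "{(a, b). {a, b} \<in> sub_E E z P} = rel E {u. P (z u)}"
    by (auto simp: rel_def sub_E_def)
  then show ?thesis by (simp add: comp_def cc_def)
qed

lemma rk_eq: "\<forall>e\<in>E. e \<subseteq> V \<Longrightarrow>
   rk V E z P Q = rkS E (V \<inter> {u. P (z u)}) (V \<inter> {u. Q (z u)})"
proof -
  assume h: "\<forall>e\<in>E. e \<subseteq> V"
  have "comp E z Q = cc E (V \<inter> {u. Q (z u)})"
  proof -
    have "rel E {u. Q (z u)} = rel E (V \<inter> {u. Q (z u)})" by (rule rel_V[OF h])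
    then show ?thesis by (simp add: comp_cc cc_def fun_eq_iff)
  qed
  moreover have "sub_V V z P = V \<inter> {u. P (z u)}" by (auto simp: sub_V_def)
  ultimately show ?thesis by (simp add: rk_def rkS_def)
qed

definition good :: "nat set set \<Rightarrow> nat set \<Rightarrow> nat \<Rightarrow> bool" where
  "good E W v \<longleftrightarrow> v \<notin> W \<and> (\<exists>w\<in>W. {v,w} \<in> E) \<and>
     (\<forall>w1\<in>W. \<forall>w2\<in>W. {v,w1} \<in> E \<longrightarrow> {v,w2} \<in> E \<longrightarrow> (w1,w2) \<in> (rel E W)\<^sup>*)"

lemma path_avoid:
  assumes g: "good E W v" and p: "(a,y) \<in> (rel E (insert v W))\<^sup>*" and a: "a \<in> W"
  shows "(y \<in> W \<longrightarrow> (a,y) \<in> (rel E W)\<^sup>*) \<and>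
         (y = v \<longrightarrow> (\<exists>w\<in>W. {v,w} \<in> E \<and> (a,w) \<in> (rel E W)\<^sup>*))"
  using p
proof (induction rule: rtrancl_induct)
  case base
  then show ?case using a g by (auto simp: good_def)
next
  case (step y y')
  have e: "{y,y'} \<in> E" and yX: "y \<in> insert v W" and y'X: "y' \<in> insert v W"
    using step.hyps(2) by (auto simp: rel_def)
  have vW: "v \<notin> W" using g by (simp add: good_def)
  show ?case
  proof (cases "y \<in> W")
    case True
    then have ay: "(a,y) \<in> (rel E W)\<^sup>*" using step.IH by simp
    show ?thesis
    proof (cases "y' \<in> W")
      case True
      then have "(y,y') \<in> rel E W" using e \<open>y \<in> W\<close> by (simp add: rel_def)
      then show ?thesis using ay vW True by (meson rtrancl.rtrancl_into_rtrancl)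
    next
      case False
      then have "y' = v" using y'X by simp
      moreover have "{v,y} \<in> E" using e \<open>y' = v\<close> by (metis doubleton_eq_iff)
      ultimately show ?thesis using ay \<open>y \<in> W\<close> vW \<open>y' = v\<close> by blast
    qed
  next
    case False
    then have "y = v" using yX by simp
    then obtain w where w: "w \<in> W" "{v,w} \<in> E" "(a,w) \<in> (rel E W)\<^sup>*" using step.IH by auto
    show ?thesis
    proof (cases "y' \<in> W")
      case True
      have "(w,y') \<in> (rel E W)\<^sup>*" using g w True e \<open>y = v\<close> by (auto simp: good_def)
      then show ?thesis using w True vW by (meson rtrancl_trans)
    next
      case False
      then show ?thesis using w y'X by auto
    qed
  qed
qed

lemma factor_fun:
  assumes "\<forall>a\<in>D. \<forall>b\<in>D. g a = g b \<longrightarrow> f a = f b"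
  shows "f ` D = (\<lambda>S. f (SOME a. a \<in> D \<and> g a = S)) ` (g ` D)"
proof -
  have "f a = f (SOME a'. a' \<in> D \<and> g a' = g a)" if "a \<in> D" for a
  proof -
    have "\<exists>a'. a' \<in> D \<and> g a' = g a" using that by blast
    then have "(SOME a'. a' \<in> D \<and> g a' = g a) \<in> D \<and> g (SOME a'. a' \<in> D \<and> g a' = g a) = g a"
      by (rule someI_ex)
    then show ?thesis using assms that by (metis (no_types, lifting))
  qed
  then show ?thesis by (auto simp: image_image)
qed

lemma card_image_factor:
  assumes "finite D" "\<forall>a\<in>D. \<forall>b\<in>D. g a = g b \<longrightarrow> f a = f b"
  shows "card (f ` D) \<le> card (g ` D)"
proof -
  have "card ((\<lambda>S. f (SOME a. a \<in> D \<and> g a = S)) ` (g ` D)) \<le> card (g ` D)"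
    using assms(1) by (intro card_image_le) simp
  then show ?thesis using factor_fun[OF assms(2)] by simp
qed

lemma card_image_cong:
  assumes "finite D" "\<forall>a\<in>D. \<forall>b\<in>D. f a = f b \<longleftrightarrow> g a = g b"
  shows "card (f ` D) = card (g ` D)"
proof (rule antisym)
  show "card (f ` D) \<le> card (g ` D)" using assms by (intro card_image_factor) auto
  show "card (g ` D) \<le> card (f ` D)" using assms by (intro card_image_factor) auto
qed

lemma move_a:
  assumes g: "good E W v" and A: "A \<subseteq> W" and fin: "finite A"
  shows "rkS E A (insert v W) = rkS E A W"
proof -
  have "\<forall>a\<in>A. \<forall>b\<in>A. cc E (insert v W) a = cc E (insert v W) b \<longleftrightarrow> cc E W a = cc E W b"
  proof (intro ballI)
    fix a b assume ab: "a \<in> A" "b \<in> A"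
    have "(a,b) \<in> (rel E (insert v W))\<^sup>* \<longleftrightarrow> (a,b) \<in> (rel E W)\<^sup>*"
    proof
      assume "(a,b) \<in> (rel E (insert v W))\<^sup>*"
      from path_avoid[OF g this] ab A show "(a,b) \<in> (rel E W)\<^sup>*" by blast
    next
      assume "(a,b) \<in> (rel E W)\<^sup>*"
      then show "(a,b) \<in> (rel E (insert v W))\<^sup>*" by (rule rtr_mono[rotated]) blast
    qed
    then show "cc E (insert v W) a = cc E (insert v W) b \<longleftrightarrow> cc E W a = cc E W b"
      unfolding cc_eq_iff .
  qed
  from card_image_cong[OF fin this] show ?thesis unfolding rkS_def by simp
qed

lemma move_b:
  assumes g: "good E W v" and B: "insert v W \<subseteq> B"
  shows "rkS E W B = rkS E (insert v W) B"
proof -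
  obtain w where w: "w \<in> W" "{v,w} \<in> E" using g by (auto simp: good_def)
  then have "(v,w) \<in> rel E B" using B by (auto simp: rel_def)
  then have "cc E B v = cc E B w" unfolding cc_eq_iff by simp
  then have "cc E B ` insert v W = cc E B ` W" using w by auto
  then show ?thesis by (simp add: rkS_def)
qed

lemma tele:
  fixes \<phi> :: "real \<Rightarrow> int"
  assumes "finite F" "\<forall>d\<in>F. t < d"
  shows "(\<Sum>d\<in>F. \<phi> (Max (insert t {s\<in>F. s < d})) - \<phi> d) = \<phi> t - \<phi> (Max (insert t F))"
  using assms
proof (induction F rule: finite_linorder_max_induct)
  case empty
  then show ?case by simp
next
  case (insert b A)
  have bA: "b \<notin> A" using insert.hyps(2) by blast
  have IH: "(\<Sum>d\<in>A. \<phi> (Max (insert t {s\<in>A. s < d})) - \<phi> d) = \<phi> t - \<phi> (Max (insert t A))"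
    using insert by simp
  have c: "(\<Sum>d\<in>A. \<phi> (Max (insert t {s\<in>insert b A. s < d})) - \<phi> d)
         = (\<Sum>d\<in>A. \<phi> (Max (insert t {s\<in>A. s < d})) - \<phi> d)"
  proof (rule sum.cong)
    fix d assume "d \<in> A"
    then have "{s\<in>insert b A. s < d} = {s\<in>A. s < d}" using insert.hyps(2) by auto
    then show "\<phi> (Max (insert t {s\<in>insert b A. s < d})) - \<phi> d = \<phi> (Max (insert t {s\<in>A. s < d})) - \<phi> d"
      by simp
  qed simp
  have e: "{s\<in>insert b A. s < b} = A" using insert.hyps(2) by auto
  have tb: "t < b" using insert.prems by simp
  have m: "Max (insert t (insert b A)) = b"
    using insert.hyps tb by (intro Max_eqI) auto
  show ?case
    using insert.hyps(1) bA IH c e m by (simp add: sum.insert)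
qed

lemma card_remove_classes:
  assumes fin: "finite D" and fin2: "\<forall>a\<in>D. \<forall>b\<in>D. g a = g b \<longrightarrow> f a = f b"
    and K: "K \<subseteq> g ` D"
    and rep: "\<forall>a\<in>D. g a \<in> K \<longrightarrow> (\<exists>b\<in>D. g b \<notin> K \<and> f b = f a)"
  shows "int (card (g ` D)) \<ge> int (card (f ` D)) + int (card K)"
proof -
  define D' where "D' = {a\<in>D. g a \<notin> K}"
  have fD': "f ` D' = f ` D"
  proof
    show "f ` D' \<subseteq> f ` D" unfolding D'_def by auto
    show "f ` D \<subseteq> f ` D'"
    proof
      fix y assume "y \<in> f ` D"
      then obtain a where a: "a \<in> D" "y = f a" by blast
      show "y \<in> f ` D'"
      proof (cases "g a \<in> K")
        case True
        then obtain b where b: "b \<in> D" "g b \<notin> K" "f b = f a" using rep a by blast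
        then have "b \<in> D'" unfolding D'_def by simp
        then show ?thesis using a b(3) by (metis rev_image_eqI)
      next
        case False
        then have "a \<in> D'" using a unfolding D'_def by simp
        then show ?thesis using a by simp
      qed
    qed
  qed
  have gD': "g ` D' = g ` D - K" unfolding D'_def by auto
  have "card (f ` D') \<le> card (g ` D')"
    using fin fin2 unfolding D'_def by (intro card_image_factor) auto
  moreover have "card (g ` D - K) = card (g ` D) - card K"
    using K fin by (intro card_Diff_subset) (auto intro: finite_subset)
  moreover have "card K \<le> card (g ` D)" using K fin by (intro card_mono) auto
  ultimately show ?thesis using fD' gD' by simp
qed

lemma nbr_exists:
  assumes "(r,x) \<in> R\<^sup>*" "r \<noteq> x"
  shows "\<exists>y. y \<noteq> x \<and> (y,x) \<in> R"
  using assms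
proof (induction rule: rtrancl_induct)
  case base then show ?case by simp
next
  case (step y z)
  then show ?case by (cases "y = z") auto
qed

lemma path_to_Z:
  assumes p: "(u,z0) \<in> (rel E X)\<^sup>*" and u: "u \<notin> Z" and z0: "z0 \<in> Z"
  shows "\<exists>v w. v \<notin> Z \<and> w \<in> Z \<and> (v,w) \<in> rel E X \<and> (u,v) \<in> (rel E X)\<^sup>*"
  using p z0
proof (induction rule: rtrancl_induct)
  case base then show ?case using u by simp
next
  case (step y y')
  show ?case
  proof (cases "y \<in> Z")
    case True then show ?thesis using step by blast
  next
    case False then show ?thesis using step by blast
  qed
qed

lemma cc_sub: "a \<in> X \<Longrightarrow> cc E X a \<subseteq> X"
proof
  fix y assume a: "a \<in> X" and "y \<in> cc E X a"
  then have "(a,y) \<in> (rel E X)\<^sup>*" by (simp add: cc_def)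
  then show "y \<in> X" using a
    by (induction rule: rtrancl_induct) (auto simp: rel_def)
qed

lemma nonCut:
  assumes finX: "finite X" and c0: "c0 \<in> X" and R0: "R0 \<subseteq> cc E X c0" "R0 \<noteq> {}"
    and ex: "y0 \<in> cc E X c0 - R0"
  shows "\<exists>x\<in>cc E X c0 - R0. \<forall>y\<in>cc E X c0 - {x}. \<exists>r\<in>R0. (r,y) \<in> (rel E (X - {x}))\<^sup>*"
proof -
  define C where "C = cc E X c0"
  define R where "R = rel E X"
  have CX: "C \<subseteq> X" using cc_sub[OF c0] by (simp add: C_def)
  have finC: "finite C" using CX finX by (rule finite_subset)
  have conn: "\<exists>n. \<exists>r\<in>R0. (r,y) \<in> R ^^ n" if "y \<in> C" for y
  proof -
    obtain r where r: "r \<in> R0" using R0(2) by blast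
    have a: "(c0,r) \<in> R\<^sup>*" using r R0(1) by (auto simp: C_def cc_def R_def)
    have b: "(c0,y) \<in> R\<^sup>*" using that by (auto simp: C_def cc_def R_def)
    have "(r,c0) \<in> R\<^sup>*" using rtr_sym[of c0 r E X] a by (simp add: R_def)
    then have "(r,y) \<in> R\<^sup>*" using b by (rule rtrancl_trans)
    then obtain n where "(r,y) \<in> R ^^ n" by (blast dest: rtrancl_imp_relpow)
    then show ?thesis using r by blast
  qed
  define d where "d y = (LEAST n. \<exists>r\<in>R0. (r,y) \<in> R ^^ n)" for y
  have dI: "\<exists>r\<in>R0. (r,y) \<in> R ^^ d y" if "y \<in> C" for y
    unfolding d_def using conn[OF that] by (rule LeastI_ex)
  have dle: "d y \<le> n" if "r \<in> R0" "(r,y) \<in> R ^^ n" for y r n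
    unfolding d_def by (rule Least_le) (use that in blast)
  have fin1: "finite (C - R0)" using finC by simp
  have ne1: "C - R0 \<noteq> {}" using ex by (auto simp: C_def)
  define m where "m = Max (d ` (C - R0))"
  have "m \<in> d ` (C - R0)" unfolding m_def using fin1 ne1 by (intro Max_in) auto
  then obtain x where x: "x \<in> C - R0" and dx: "d x = m" by auto
  have xmax: "d y \<le> d x" if "y \<in> C - R0" for y
    unfolding dx m_def using fin1 that by (intro Max_ge) auto
  have d0: "d r = 0" if "r \<in> R0" for r
    using dle[OF that, of r 0] by simp
  have inC: "y \<in> C" if "r \<in> R0" "(r,y) \<in> R ^^ n" for r y n
  proof -
    have "(c0,r) \<in> R\<^sup>*" using that(1) R0(1) by (auto simp: C_def cc_def R_def)
    moreover have "(r,y) \<in> R\<^sup>*" using that(2) by (meson relpow_imp_rtrancl)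
    ultimately show ?thesis by (auto simp: C_def cc_def R_def)
  qed
  have main: "\<forall>y\<in>C - {x}. d y = n \<longrightarrow> (\<exists>r\<in>R0. (r,y) \<in> (rel E (X - {x}))\<^sup>*)" for n
  proof (induction n)
    case 0
    show ?case
    proof (intro ballI impI)
      fix y assume y: "y \<in> C - {x}" "d y = 0"
      have "y \<in> C" using y by simp
      then obtain r where "r \<in> R0" "(r,y) \<in> R ^^ 0" using dI y(2) by fastforce
      then show "\<exists>r\<in>R0. (r,y) \<in> (rel E (X - {x}))\<^sup>*" by auto
    qed
  next
    case (Suc n)
    show ?case
    proof (intro ballI impI)
      fix y assume y: "y \<in> C - {x}" "d y = Suc n"
      have "y \<in> C" using y by simp
      then obtain r where r: "r \<in> R0" "(r,y) \<in> R ^^ Suc n" using dI y(2) by fastforce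
      then obtain y' where y': "(r,y') \<in> R ^^ n" "(y',y) \<in> R" by (meson relpow_Suc_E)
      have y'C: "y' \<in> C" using inC[OF r(1) y'(1)] .
      obtain r' where r': "r' \<in> R0" "(r',y') \<in> R ^^ d y'" using dI[OF y'C] by blast
      have "(r',y) \<in> R ^^ Suc (d y')" using r'(2) y'(2) by (meson relpow_Suc_I)
      then have "d y \<le> Suc (d y')" using dle[OF r'(1)] by blast
      moreover have "d y' \<le> n" using dle[OF r(1) y'(1)] .
      ultimately have dy': "d y' = n" using y(2) by simp
      have yR0: "y \<notin> R0"
      proof
        assume "y \<in> R0" then have "d y = 0" by (rule d0)
        then show False using y(2) by simp
      qed
      have "y' \<noteq> x"
      proof
        assume "y' = x"
        then have "d x = n" using dy' by simp
        moreover have "d y \<le> d x" using xmax y yR0 by blast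
        ultimately show False using y(2) by simp
      qed
      then obtain r'' where r'': "r'' \<in> R0" "(r'',y') \<in> (rel E (X - {x}))\<^sup>*"
        using Suc.IH y'C dy' by blast
      have "(y',y) \<in> rel E (X - {x})" using y'(2) \<open>y' \<noteq> x\<close> y(1) by (auto simp: R_def rel_def)
      then show "\<exists>r\<in>R0. (r,y) \<in> (rel E (X - {x}))\<^sup>*" using r'' by (meson rtrancl.rtrancl_into_rtrancl)
    qed
  qed
  have "\<forall>y\<in>C - {x}. \<exists>r\<in>R0. (r,y) \<in> (rel E (X - {x}))\<^sup>*"
  proof
    fix y assume "y \<in> C - {x}"
    then show "\<exists>r\<in>R0. (r,y) \<in> (rel E (X - {x}))\<^sup>*" using main[of "d y"] by blast
  qed
  then show ?thesis using x unfolding C_def by blast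
qed

lemma in_cc: "(a,b) \<in> (rel E U)\<^sup>* \<Longrightarrow> b \<in> cc E U a"
  by (simp add: cc_def)

lemma cc_same: "b \<in> cc E U a \<Longrightarrow> cc E U b = cc E U a"
proof -
  assume "b \<in> cc E U a"
  then have "(a,b) \<in> (rel E U)\<^sup>*" by (simp add: cc_def)
  then have "(b,a) \<in> (rel E U)\<^sup>*" by (rule rtr_sym)
  then show ?thesis by (simp add: cc_eq_iff)
qed

lemma cc_self: "a \<in> cc E U a"
  by (simp add: cc_def)

lemma up_good:
  assumes x: "x \<in> X" and nb: "y \<noteq> x" "(y,x) \<in> rel E X"
    and hub: "\<forall>y\<in>cc E X x - {x}. (c, y) \<in> (rel E (X - {x}))\<^sup>*"
  shows "good E (X - {x}) x"
  unfolding good_def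
proof (intro conjI)
  show "x \<notin> X - {x}" by simp
  have "{y,x} \<in> E" "y \<in> X" using nb by (auto simp: rel_def)
  then have "{x,y} \<in> E" by (simp add: insert_commute)
  then show "\<exists>w\<in>X - {x}. {x,w} \<in> E" using \<open>y \<in> X\<close> nb(1) by blast
  show "\<forall>w1\<in>X - {x}. \<forall>w2\<in>X - {x}. {x, w1} \<in> E \<longrightarrow> {x, w2} \<in> E \<longrightarrow> (w1, w2) \<in> (rel E (X - {x}))\<^sup>*"
  proof (intro ballI impI)
    fix w1 w2 assume w: "w1 \<in> X - {x}" "w2 \<in> X - {x}" "{x,w1} \<in> E" "{x,w2} \<in> E"
    have "(x,w1) \<in> rel E X" "(x,w2) \<in> rel E X" using w x by (auto simp: rel_def)
    then have "w1 \<in> cc E X x - {x}" "w2 \<in> cc E X x - {x}" using w by (auto simp: cc_def)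
    then have "(c,w1) \<in> (rel E (X - {x}))\<^sup>*" "(c,w2) \<in> (rel E (X - {x}))\<^sup>*" using hub by auto
    then show "(w1, w2) \<in> (rel E (X - {x}))\<^sup>*" by (meson rtr_sym rtrancl_trans)
  qed
qed

lemma births_ge:
  assumes "finite X" "Z \<subseteq> X" "K \<subseteq> cc E X ` X - cc E X ` Z"
  shows "int (card (cc E X ` X)) - int (card (cc E X ` Z)) \<ge> int (card K)"
proof -
  have f: "finite (cc E X ` X)" using assms(1) by simp
  have s: "cc E X ` Z \<subseteq> cc E X ` X" using assms(2) by auto
  have "card (cc E X ` X - cc E X ` Z) = card (cc E X ` X) - card (cc E X ` Z)"
    using f s by (intro card_Diff_subset) (auto intro: finite_subset)
  moreover have "card (cc E X ` Z) \<le> card (cc E X ` X)" using f s by (intro card_mono)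
  moreover have "card K \<le> card (cc E X ` X - cc E X ` Z)" using f assms(3) by (intro card_mono) auto
  ultimately show ?thesis by linarith
qed

lemma deaths_ge:
  assumes finZ: "finite Z" and ZX: "Z \<subseteq> X" and K: "K \<subseteq> cc E Z ` Z"
    and rep: "\<forall>a\<in>Z. cc E Z a \<in> K \<longrightarrow> (\<exists>b\<in>Z. cc E Z b \<notin> K \<and> cc E X b = cc E X a)"
  shows "int (card (cc E Z ` Z)) - int (card (cc E X ` Z)) \<ge> int (card K)"
proof -
  have "\<forall>a\<in>Z. \<forall>b\<in>Z. cc E Z a = cc E Z b \<longrightarrow> cc E X a = cc E X b"
  proof (intro ballI impI)
    fix a b assume "a \<in> Z" "b \<in> Z" "cc E Z a = cc E Z b"
    then have "(a,b) \<in> (rel E Z)\<^sup>*" by (simp add: cc_eq_iff)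
    then have "(a,b) \<in> (rel E X)\<^sup>*" using ZX by (rule rtr_mono[rotated])
    then show "cc E X a = cc E X b" by (simp add: cc_eq_iff)
  qed
  from card_remove_classes[OF finZ this K rep] show ?thesis by simp
qed

lemma typ_lem:
  assumes finX: "finite X" and ZX: "Z \<subseteq> X" and u: "u \<in> X" "u \<notin> Z"
    and nogood: "\<forall>v\<in>X - Z. \<not> good E (X - {v}) v \<and> \<not> good E Z v"
  shows "(cc E X u \<inter> Z = {} \<and> cc E X u = {u}) \<or>
    (\<exists>v w1 w2. v \<in> X - Z \<and> v \<in> cc E X u \<and> w1 \<in> Z \<and> w2 \<in> Z \<and> {v,w1} \<in> E \<and> {v,w2} \<in> E
        \<and> (w1,w2) \<notin> (rel E Z)\<^sup>*)"
proof (cases "cc E X u \<inter> Z = {}")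
  case True
  have "cc E X u = {u}"
  proof (rule ccontr)
    assume ne: "cc E X u \<noteq> {u}"
    have uu: "u \<in> cc E X u" by (rule cc_self)
    then obtain y0 where y0: "y0 \<in> cc E X u - {u}" using ne by blast
    obtain x where x: "x \<in> cc E X u - {u}"
      and h: "\<forall>y\<in>cc E X u - {x}. \<exists>r\<in>{u}. (r,y) \<in> (rel E (X - {x}))\<^sup>*"
      using nonCut[OF finX u(1), of "{u}" E y0] uu y0 by blast
    have xX: "x \<in> X" using x cc_sub[OF u(1)] by blast
    have xZ: "x \<notin> Z" using x True by blast
    have ccx: "cc E X x = cc E X u" using x by (intro cc_same) blast
    have "(u,x) \<in> (rel E X)\<^sup>*" using x by (simp add: cc_def)
    then obtain y where y: "y \<noteq> x" "(y,x) \<in> rel E X" using x nbr_exists[of u x] by blast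
    have "good E (X - {x}) x"
      using up_good[OF xX y, of u] h ccx by auto
    then show False using nogood xX xZ by blast
  qed
  then show ?thesis using True by blast
next
  case False
  then obtain z0 where z0: "z0 \<in> cc E X u" "z0 \<in> Z" by blast
  then have "(u,z0) \<in> (rel E X)\<^sup>*" by (simp add: cc_def)
  then obtain v w where vw: "v \<notin> Z" "w \<in> Z" "(v,w) \<in> rel E X" "(u,v) \<in> (rel E X)\<^sup>*"
    using path_to_Z[OF _ u(2) z0(2)] by blast
  have vX: "v \<in> X" "{v,w} \<in> E" using vw(3) by (auto simp: rel_def)
  have "\<not> good E Z v" using nogood vX vw(1) by blast
  then obtain w1 w2 where "w1 \<in> Z" "w2 \<in> Z" "{v,w1} \<in> E" "{v,w2} \<in> E" "(w1,w2) \<notin> (rel E Z)\<^sup>*"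
    unfolding good_def using vw(1,2) vX(2) by blast
  moreover have "v \<in> cc E X u" using vw(4) by (simp add: cc_def)
  ultimately show ?thesis using vX vw(1) by blast
qed


lemma comb:
  assumes finX: "finite X" and ZX: "Z \<subseteq> X" and u1: "u1 \<in> X" "u1 \<notin> Z"
    and u2: "u2 \<in> X" "u2 \<notin> Z" and u12: "u1 \<noteq> u2"
    and ev: "(int (card (cc E X ` X)) - int (card (cc E X ` Z)))
           + (int (card (cc E Z ` Z)) - int (card (cc E X ` Z))) \<le> 1"
  shows "\<exists>v\<in>X - Z. good E (X - {v}) v \<or> good E Z v"
proof (rule ccontr)
  assume "\<not> ?thesis"
  then have nogood: "\<forall>v\<in>X - Z. \<not> good E (X - {v}) v \<and> \<not> good E Z v" by blast
  have finZ: "finite Z" using finite_subset[OF ZX finX] .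
  have b0: "int (card (cc E X ` X)) - int (card (cc E X ` Z)) \<ge> 0"
    using births_ge[OF finX ZX, of "{}"] by simp
  have d0: "int (card (cc E Z ` Z)) - int (card (cc E X ` Z)) \<ge> 0"
    using deaths_ge[OF finZ ZX, of "{}"] by simp
  have ccXZ: "cc E X a = cc E X b" if "a \<in> Z" "b \<in> Z" "cc E Z a = cc E Z b" for a b
  proof -
    have "(a,b) \<in> (rel E Z)\<^sup>*" using that by (simp add: cc_eq_iff)
    then have "(a,b) \<in> (rel E X)\<^sup>*" using ZX by (rule rtr_mono[rotated])
    then show ?thesis by (simp add: cc_eq_iff)
  qed
  have Bnot: "cc E X u \<notin> cc E X ` Z" if "cc E X u \<inter> Z = {}" for u
  proof
    assume "cc E X u \<in> cc E X ` Z"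
    then obtain z where z: "z \<in> Z" "cc E X u = cc E X z" by blast
    then have "z \<in> cc E X u" using cc_self[of z E X] by simp
    then show False using that z(1) by blast
  qed
  have Dfacts: "cc E X w1 = cc E X u \<and> cc E X w2 = cc E X u \<and> cc E Z w1 \<noteq> cc E Z w2"
    if "v \<in> X - Z" "v \<in> cc E X u" "w1 \<in> Z" "w2 \<in> Z" "{v,w1} \<in> E" "{v,w2} \<in> E"
       "(w1,w2) \<notin> (rel E Z)\<^sup>*" for u v w1 w2
  proof (intro conjI)
    have "(v,w1) \<in> rel E X" "(v,w2) \<in> rel E X" using that ZX by (auto simp: rel_def)
    moreover have "(u,v) \<in> (rel E X)\<^sup>*" using that(2) by (simp add: cc_def)
    ultimately have "(u,w1) \<in> (rel E X)\<^sup>*" "(u,w2) \<in> (rel E X)\<^sup>*" by auto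
    then have "w1 \<in> cc E X u" "w2 \<in> cc E X u" by (auto intro: in_cc)
    then show "cc E X w1 = cc E X u" "cc E X w2 = cc E X u" by (simp_all add: cc_same)
    show "cc E Z w1 \<noteq> cc E Z w2" using that(7) by (simp add: cc_eq_iff)
  qed
  note T1 = typ_lem[OF finX ZX u1 nogood] and T2 = typ_lem[OF finX ZX u2 nogood]
  have B1: "int (card (cc E X ` X)) - int (card (cc E X ` Z)) \<ge> 1" if "cc E X u \<inter> Z = {}" "u \<in> X" for u
    using births_ge[OF finX ZX, of "{cc E X u}"] Bnot[OF that(1)] that(2) by auto
  have D1: "int (card (cc E Z ` Z)) - int (card (cc E X ` Z)) \<ge> 1"
    if "w1 \<in> Z" "w2 \<in> Z" "cc E X w1 = cc E X w2" "cc E Z w1 \<noteq> cc E Z w2" for w1 w2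
  proof -
    have "\<forall>a\<in>Z. cc E Z a \<in> {cc E Z w2} \<longrightarrow> (\<exists>b\<in>Z. cc E Z b \<notin> {cc E Z w2} \<and> cc E X b = cc E X a)"
      using that ccXZ by (metis singletonD)
    from deaths_ge[OF finZ ZX, of "{cc E Z w2}", OF _ this] that show ?thesis by auto
  qed
  have D2: "int (card (cc E Z ` Z)) - int (card (cc E X ` Z)) \<ge> 2"
    if "w1 \<in> Z" "w2 \<in> Z" "w3 \<in> Z" "w4 \<in> Z" "cc E X w1 = cc E X w2" "cc E X w3 = cc E X w4"
       "cc E Z w1 \<noteq> cc E Z w2" "cc E Z w3 \<noteq> cc E Z w4" "cc E X w1 \<noteq> cc E X w3" for w1 w2 w3 w4
  proof -
    have ne: "cc E Z w2 \<noteq> cc E Z w4" using that ccXZ by metis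
    have "\<forall>a\<in>Z. cc E Z a \<in> {cc E Z w2, cc E Z w4} \<longrightarrow> (\<exists>b\<in>Z. cc E Z b \<notin> {cc E Z w2, cc E Z w4} \<and> cc E X b = cc E X a)"
    proof (intro ballI impI)
      fix a assume a: "a \<in> Z" "cc E Z a \<in> {cc E Z w2, cc E Z w4}"
      show "\<exists>b\<in>Z. cc E Z b \<notin> {cc E Z w2, cc E Z w4} \<and> cc E X b = cc E X a"
      proof (cases "cc E Z a = cc E Z w2")
        case True
        then have "cc E X a = cc E X w2" using ccXZ a(1) that(2) by blast
        moreover have "cc E Z w1 \<noteq> cc E Z w4" using that ccXZ by metis
        ultimately show ?thesis using that(1,5,7) by auto
      next
        case False
        then have "cc E Z a = cc E Z w4" using a by blast
        then have "cc E X a = cc E X w4" using ccXZ a(1) that(4) by blast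
        moreover have "cc E Z w3 \<noteq> cc E Z w2" using that ccXZ by metis
        ultimately show ?thesis using that(3,6,8) by auto
      qed
    qed
    from deaths_ge[OF finZ ZX, of "{cc E Z w2, cc E Z w4}", OF _ this] that ne show ?thesis by auto
  qed
  have D3: "int (card (cc E Z ` Z)) - int (card (cc E X ` Z)) \<ge> 2"
    if "w1 \<in> Z" "w2 \<in> Z" "w3 \<in> Z" "cc E X w1 = cc E X w2" "cc E X w1 = cc E X w3"
       "cc E Z w1 \<noteq> cc E Z w2" "cc E Z w1 \<noteq> cc E Z w3" "cc E Z w2 \<noteq> cc E Z w3" for w1 w2 w3
  proof -
    have "\<forall>a\<in>Z. cc E Z a \<in> {cc E Z w2, cc E Z w3} \<longrightarrow> (\<exists>b\<in>Z. cc E Z b \<notin> {cc E Z w2, cc E Z w3} \<and> cc E X b = cc E X a)"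
    proof (intro ballI impI)
      fix a assume a: "a \<in> Z" "cc E Z a \<in> {cc E Z w2, cc E Z w3}"
      then have "cc E X a = cc E X w1" using ccXZ that by (metis insertE singletonD)
      then show "\<exists>b\<in>Z. cc E Z b \<notin> {cc E Z w2, cc E Z w3} \<and> cc E X b = cc E X a"
        using that(1,6,7) by auto
    qed
    from deaths_ge[OF finZ ZX, of "{cc E Z w2, cc E Z w3}", OF _ this] that show ?thesis by auto
  qed
  show False
  proof (cases "cc E X u1 = cc E X u2")
    case False
    show False
    proof (cases "cc E X u1 \<inter> Z = {} \<and> cc E X u1 = {u1}")
      case B1c: True
      show False
      proof (cases "cc E X u2 \<inter> Z = {} \<and> cc E X u2 = {u2}")
        case True
        have "{cc E X u1, cc E X u2} \<subseteq> cc E X ` X - cc E X ` Z"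
        proof -
          have "cc E X u1 \<notin> cc E X ` Z" "cc E X u2 \<notin> cc E X ` Z"
            using Bnot B1c True by blast+
          moreover have "cc E X u1 \<in> cc E X ` X" "cc E X u2 \<in> cc E X ` X" using u1 u2 by blast+
          ultimately show ?thesis by blast
        qed
        then have "int (card (cc E X ` X)) - int (card (cc E X ` Z)) \<ge> 2"
          using births_ge[OF finX ZX, of "{cc E X u1, cc E X u2}"] False by auto
        then show False using ev d0 by linarith
      next
        case False
        then obtain v w1 w2 where "v \<in> X - Z" "v \<in> cc E X u2" "w1 \<in> Z" "w2 \<in> Z" "{v,w1} \<in> E" "{v,w2} \<in> E"
          "(w1,w2) \<notin> (rel E Z)\<^sup>*" using T2 by blast
        note h = Dfacts[OF this]
        have "int (card (cc E Z ` Z)) - int (card (cc E X ` Z)) \<ge> 1"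
          using D1[of w1 w2] h \<open>w1 \<in> Z\<close> \<open>w2 \<in> Z\<close> by simp
        then show False using ev B1[of u1] B1c u1 by linarith
      qed
    next
      case D1c: False
      then obtain v w1 w2 where a1: "v \<in> X - Z" "v \<in> cc E X u1" "w1 \<in> Z" "w2 \<in> Z" "{v,w1} \<in> E" "{v,w2} \<in> E"
          "(w1,w2) \<notin> (rel E Z)\<^sup>*" using T1 by blast
      note h1 = Dfacts[OF a1]
      show False
      proof (cases "cc E X u2 \<inter> Z = {} \<and> cc E X u2 = {u2}")
        case True
        have "int (card (cc E Z ` Z)) - int (card (cc E X ` Z)) \<ge> 1"
          using D1[of w1 w2] h1 a1 by simp
        then show False using ev B1[of u2] True u2 by linarith
      next
        case False
        then obtain v' w3 w4 where a2: "v' \<in> X - Z" "v' \<in> cc E X u2" "w3 \<in> Z" "w4 \<in> Z" "{v',w3} \<in> E" "{v',w4} \<in> E"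
          "(w3,w4) \<notin> (rel E Z)\<^sup>*" using T2 by blast
        note h2 = Dfacts[OF a2]
        have "int (card (cc E Z ` Z)) - int (card (cc E X ` Z)) \<ge> 2"
          using D2[of w1 w2 w3 w4] h1 h2 a1 a2 \<open>cc E X u1 \<noteq> cc E X u2\<close> by simp
        then show False using ev b0 by linarith
      qed
    qed
  next
    case True
    have "u2 \<in> cc E X u2" by (rule cc_self)
    then have u2C: "u2 \<in> cc E X u1" using True by simp
    have "\<not> (cc E X u1 \<inter> Z = {} \<and> cc E X u1 = {u1})"
    proof
      assume "cc E X u1 \<inter> Z = {} \<and> cc E X u1 = {u1}"
      then have "u2 \<in> {u1}" using u2C by simp
      then show False using u12 by simp
    qed
    then obtain v w1 w2 where a1: "v \<in> X - Z" "v \<in> cc E X u1" "w1 \<in> Z" "w2 \<in> Z" "{v,w1} \<in> E" "{v,w2} \<in> E"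
          "(w1,w2) \<notin> (rel E Z)\<^sup>*" using T1 by blast
    note h1 = Dfacts[OF a1]
    show False
    proof (cases "\<exists>w3\<in>Z. cc E X w3 = cc E X u1 \<and> cc E Z w3 \<noteq> cc E Z w1 \<and> cc E Z w3 \<noteq> cc E Z w2")
      case True
      then obtain w3 where w3: "w3 \<in> Z" "cc E X w3 = cc E X u1" "cc E Z w3 \<noteq> cc E Z w1" "cc E Z w3 \<noteq> cc E Z w2"
        by blast
      have "int (card (cc E Z ` Z)) - int (card (cc E X ` Z)) \<ge> 2"
        using D3[of w1 w2 w3] h1 a1 w3 by simp
      then show False using ev b0 by linarith
    next
      case False
      define C where "C = cc E X u1"
      define R0 where "R0 = cc E Z w1 \<union> cc E Z w2 \<union> {v}"
      have CX: "C \<subseteq> X" unfolding C_def using cc_sub[OF u1(1)] .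
      have ccZsub: "cc E Z w \<subseteq> C" if "w \<in> Z" "cc E X w = cc E X u1" for w
      proof
        fix y assume "y \<in> cc E Z w"
        then have "(w,y) \<in> (rel E Z)\<^sup>*" by (simp add: cc_def)
        then have "(w,y) \<in> (rel E X)\<^sup>*" using ZX by (rule rtr_mono[rotated])
        then have "y \<in> cc E X w" by (rule in_cc)
        then show "y \<in> C" using that C_def by simp
      qed
      have ZsubZ: "cc E Z w \<subseteq> Z" if "w \<in> Z" for w using cc_sub[OF that] .
      have R0C: "R0 \<subseteq> C" unfolding R0_def using ccZsub[of w1] ccZsub[of w2] h1 a1 C_def by auto
      have R0ne: "R0 \<noteq> {}" unfolding R0_def by blast
      define y0 where "y0 = (if u1 = v then u2 else u1)"
      have y0: "y0 \<in> C - R0"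
      proof -
        have "y0 \<notin> Z" "y0 \<noteq> v" using u1 u2 u12 by (auto simp: y0_def)
        moreover have "y0 \<in> C" using u2C cc_self[of u1 E X] by (auto simp: y0_def C_def)
        ultimately show ?thesis unfolding R0_def using ZsubZ a1(3,4) by blast
      qed
      obtain x where x: "x \<in> C - R0"
        and hx: "\<forall>y\<in>C - {x}. \<exists>r\<in>R0. (r,y) \<in> (rel E (X - {x}))\<^sup>*"
        using nonCut[OF finX u1(1) R0C[unfolded C_def] R0ne y0[unfolded C_def]] unfolding C_def by blast
      have xX: "x \<in> X" using x CX by blast
      have xZ: "x \<notin> Z"
      proof
        assume xZ: "x \<in> Z"
        have "x \<in> cc E X u1" using x C_def by simp
        then have "cc E X x = cc E X u1" by (rule cc_same)
        then have "cc E Z x = cc E Z w1 \<or> cc E Z x = cc E Z w2" using False xZ by blast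
        then have "x \<in> cc E Z w1 \<or> x \<in> cc E Z w2" using cc_self[of x E Z] by auto
        then show False using x unfolding R0_def by blast
      qed
      have vx: "v \<noteq> x" using x unfolding R0_def by blast
      have hubR: "(v,r) \<in> (rel E (X - {x}))\<^sup>*" if "r \<in> R0" for r
      proof -
        have ZX': "Z \<subseteq> X - {x}" using ZX xZ by blast
        have vX: "v \<in> X - {x}" using a1(1) vx by blast
        have e: "(v,w) \<in> rel E (X - {x})" if "w \<in> Z" "{v,w} \<in> E" for w
          using that vX ZX' by (auto simp: rel_def)
        show ?thesis
        proof (cases "r = v")
          case True then show ?thesis by simp
        next
          case False
          then have "r \<in> cc E Z w1 \<or> r \<in> cc E Z w2" using that unfolding R0_def by blast
          then show ?thesis
          proof
            assume "r \<in> cc E Z w1"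
            then have "(w1,r) \<in> (rel E Z)\<^sup>*" by (simp add: cc_def)
            then have "(w1,r) \<in> (rel E (X - {x}))\<^sup>*" using ZX' by (rule rtr_mono[rotated])
            with e[OF a1(3,5)] show ?thesis by (rule converse_rtrancl_into_rtrancl)
          next
            assume "r \<in> cc E Z w2"
            then have "(w2,r) \<in> (rel E Z)\<^sup>*" by (simp add: cc_def)
            then have "(w2,r) \<in> (rel E (X - {x}))\<^sup>*" using ZX' by (rule rtr_mono[rotated])
            with e[OF a1(4,6)] show ?thesis by (rule converse_rtrancl_into_rtrancl)
          qed
        qed
      qed
      have "x \<in> cc E X u1" using x C_def by simp
      then have ccx: "cc E X x = C" unfolding C_def by (rule cc_same)
      have hub: "\<forall>y\<in>cc E X x - {x}. (v, y) \<in> (rel E (X - {x}))\<^sup>*"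
      proof
        fix y assume "y \<in> cc E X x - {x}"
        then have "y \<in> C - {x}" using ccx by simp
        then obtain r where r: "r \<in> R0" "(r,y) \<in> (rel E (X - {x}))\<^sup>*" using hx by blast
        from hubR[OF r(1)] r(2) show "(v, y) \<in> (rel E (X - {x}))\<^sup>*" by (rule rtrancl_trans)
      qed
      have "(x,v) \<in> (rel E X)\<^sup>*"
      proof -
        have "v \<in> C" using a1(2) C_def by simp
        then have "v \<in> cc E X x" using ccx by simp
        then show ?thesis by (simp add: cc_def)
      qed
      then have "(v,x) \<in> (rel E X)\<^sup>*" by (rule rtr_sym)
      from nbr_exists[OF this vx] obtain y where y: "y \<noteq> x" "(y,x) \<in> rel E X" by blast
      have "good E (X - {x}) x" using up_good[OF xX y hub] .
      moreover have "x \<in> X - Z" using xX xZ by simp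
      ultimately show False using nogood by blast
    qed
  qed
qed

definition LL :: "nat set \<Rightarrow> (nat \<Rightarrow> real) \<Rightarrow> real \<Rightarrow> nat set" where
  "LL V z r = V \<inter> {u. z u \<le> r}"
definition SS :: "nat set \<Rightarrow> (nat \<Rightarrow> real) \<Rightarrow> real \<Rightarrow> nat set" where
  "SS V z r = V \<inter> {u. z u < r}"

lemma mf_eq:
  assumes "\<forall>e\<in>E. e \<subseteq> V"
  shows "mult_fin V E z b d = rkS E (LL V z b) (SS V z d) - rkS E (SS V z b) (SS V z d)
     - rkS E (LL V z b) (LL V z d) + rkS E (SS V z b) (LL V z d)"
  unfolding mult_fin_def rk_eq[OF assms] LL_def SS_def by simp

lemma mi_eq:
  assumes "\<forall>e\<in>E. e \<subseteq> V"
  shows "mult_inf V E z b = rkS E (LL V z b) V - rkS E (SS V z b) V"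
  unfolding mult_inf_def rk_eq[OF assms] LL_def SS_def by simp

lemma dc_plus: "diag_coords (A + B) = diag_coords A + diag_coords B"
  by (simp add: diag_coords_def)

lemma dc_empty: "diag_coords {#} = {#}"
  by (simp add: diag_coords_def)

lemma dc_sum: "diag_coords (sum f S) = (\<Sum>s\<in>S. diag_coords (f s))"
proof (cases "finite S")
  case True
  then show ?thesis by (induction S rule: finite_induct) (simp_all add: dc_empty dc_plus)
next
  case False
  then show ?thesis by (simp add: dc_empty)
qed

lemma cnt_rep: "count (diag_coords (replicate_mset n p)) t = n * count (diag_coords {#p#}) t"
proof (induction n)
  case 0 then show ?case by (simp add: dc_empty)
next
  case (Suc n)
  have "replicate_mset (Suc n) p = {#p#} + replicate_mset n p" by simp
  then show ?case using Suc by (simp only: dc_plus count_union) simp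
qed

lemma cnt_fin: "count (diag_coords {#(b, ereal d)#}) t = (if b = t then 1 else 0) + (if d = t then 1 else 0)"
  by (simp add: diag_coords_def)

lemma cnt_inf: "count (diag_coords {#(b, \<infinity>)#}) t = (if b = t then 1 else 0)"
  by (simp add: diag_coords_def)

lemma count_PH0_eq:
  "count (diag_coords (PH0 V E z)) t =
    (\<Sum>b\<in>z ` V. \<Sum>d\<in>z ` V. if b < d then nat (mult_fin V E z b d) * ((if b = t then 1 else 0) + (if d = t then 1 else 0)) else 0)
  + (\<Sum>b\<in>z ` V. nat (mult_inf V E z b) * (if b = t then 1 else 0))"
proof -
  have "count (diag_coords (if b < d then replicate_mset (nat (mult_fin V E z b d)) (b, ereal d) else {#})) t
     = (if b < d then nat (mult_fin V E z b d) * ((if b = t then 1 else 0) + (if d = t then 1 else 0)) else 0)" for b d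
    by (cases "b < d") (simp_all only: cnt_rep cnt_fin dc_empty if_True if_False, simp)
  then show ?thesis unfolding PH0_def dc_plus dc_sum count_union count_sum by (simp add: cnt_rep cnt_inf)
qed


lemma sum_nat_ge: "finite A \<Longrightarrow> int (\<Sum>x\<in>A. nat (f x)) \<ge> (\<Sum>x\<in>A. f x)"
  by (induction A rule: finite_induct) auto

lemma count_PH0_ge:
  assumes fin: "finite V" and t: "t \<in> z ` V"
  shows "int (count (diag_coords (PH0 V E z)) t) \<ge>
    (\<Sum>d\<in>{d\<in>z ` V. t < d}. mult_fin V E z t d) + mult_inf V E z t
    + (\<Sum>b\<in>{b\<in>z ` V. b < t}. mult_fin V E z b t)"
proof -
  define S where "S = z ` V"
  have finS: "finite S" using fin by (simp add: S_def)
  define c where "c b d = (if b < d then nat (mult_fin V E z b d) * ((if b = t then 1 else 0) + (if d = t then 1 else 0)) else (0::nat))" for b d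
  have tS: "t \<in> S" using t by (simp add: S_def)
  have e1: "(\<Sum>b\<in>S. \<Sum>d\<in>S. c b d) = (\<Sum>d\<in>S. c t d) + (\<Sum>b\<in>S - {t}. \<Sum>d\<in>S. c b d)"
    by (rule sum.remove[OF finS tS])
  have e2: "(\<Sum>d\<in>S. c t d) = (\<Sum>d\<in>{d\<in>S. t < d}. nat (mult_fin V E z t d))"
  proof -
    have "(\<Sum>d\<in>S. c t d) = (\<Sum>d\<in>S. if t < d then nat (mult_fin V E z t d) else 0)"
      by (rule sum.cong) (auto simp: c_def)
    also have "\<dots> = (\<Sum>d\<in>{d\<in>S. t < d}. nat (mult_fin V E z t d))"
      using finS by (simp add: sum.inter_filter)
    finally show ?thesis .
  qed
  have e3: "(\<Sum>b\<in>S - {t}. \<Sum>d\<in>S. c b d) \<ge> (\<Sum>b\<in>S - {t}. c b t)"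
    using finS tS by (intro sum_mono member_le_sum) auto
  have e4: "(\<Sum>b\<in>S - {t}. c b t) = (\<Sum>b\<in>{b\<in>S. b < t}. nat (mult_fin V E z b t))"
  proof -
    have "(\<Sum>b\<in>S - {t}. c b t) = (\<Sum>b\<in>S - {t}. if b < t then nat (mult_fin V E z b t) else 0)"
      by (rule sum.cong) (auto simp: c_def)
    also have "\<dots> = (\<Sum>b\<in>{b\<in>S - {t}. b < t}. nat (mult_fin V E z b t))"
      using finS by (intro sum.inter_filter[symmetric]) simp
    also have "{b\<in>S - {t}. b < t} = {b\<in>S. b < t}" by auto
    finally show ?thesis .
  qed
  have e5: "(\<Sum>b\<in>S. nat (mult_inf V E z b) * (if b = t then 1 else 0)) = nat (mult_inf V E z t)"
    using finS tS by (simp add: if_distrib[of "\<lambda>x. _ * x"] sum.delta cong: if_cong)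
  have cnt: "count (diag_coords (PH0 V E z)) t =
     (\<Sum>b\<in>S. \<Sum>d\<in>S. c b d) + (\<Sum>b\<in>S. nat (mult_inf V E z b) * (if b = t then 1 else 0))"
    unfolding count_PH0_eq S_def c_def ..
  have "count (diag_coords (PH0 V E z)) t \<ge>
     (\<Sum>d\<in>{d\<in>S. t < d}. nat (mult_fin V E z t d)) + nat (mult_inf V E z t)
     + (\<Sum>b\<in>{b\<in>S. b < t}. nat (mult_fin V E z b t))"
    using cnt e1 e2 e3 e4 e5 by linarith
  then have "int (count (diag_coords (PH0 V E z)) t) \<ge>
     int (\<Sum>d\<in>{d\<in>S. t < d}. nat (mult_fin V E z t d)) + int (nat (mult_inf V E z t))
     + int (\<Sum>b\<in>{b\<in>S. b < t}. nat (mult_fin V E z b t))" by linarith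
  moreover have "int (\<Sum>d\<in>{d\<in>S. t < d}. nat (mult_fin V E z t d)) \<ge> (\<Sum>d\<in>{d\<in>S. t < d}. mult_fin V E z t d)"
    using finS by (intro sum_nat_ge) auto
  moreover have "int (\<Sum>b\<in>{b\<in>S. b < t}. nat (mult_fin V E z b t)) \<ge> (\<Sum>b\<in>{b\<in>S. b < t}. mult_fin V E z b t)"
    using finS by (intro sum_nat_ge) auto
  moreover have "int (nat (mult_inf V E z t)) \<ge> mult_inf V E z t" by simp
  ultimately show ?thesis unfolding S_def by linarith
qed


lemma births_tele:
  assumes fin: "finite V" and ed: "\<forall>e\<in>E. e \<subseteq> V" and t: "t \<in> z ` V"
  shows "(\<Sum>d\<in>{d\<in>z ` V. t < d}. mult_fin V E z t d) + mult_inf V E z t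
    = rkS E (LL V z t) (LL V z t) - rkS E (SS V z t) (LL V z t)"
proof -
  define F where "F = {d\<in>z ` V. t < d}"
  have finF: "finite F" using fin by (simp add: F_def)
  have tF: "\<forall>d\<in>F. t < d" by (simp add: F_def)
  define \<phi> where "\<phi> r = rkS E (LL V z t) (LL V z r) - rkS E (SS V z t) (LL V z r)" for r
  define prd where "prd d = Max (insert t {s\<in>F. s < d})" for d
  have prdp: "SS V z d = LL V z (prd d)" if "d \<in> F" for d
  proof -
    have fin': "finite (insert t {s\<in>F. s < d})" using finF by simp
    have M: "prd d \<in> insert t {s\<in>F. s < d}" unfolding prd_def using fin' by (intro Max_in) auto
    have Mlt: "prd d < d" using M that tF by auto
    have ge: "x \<le> prd d" if "x \<in> insert t {s\<in>F. s < d}" for x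
      unfolding prd_def using fin' that by (intro Max_ge) auto
    show ?thesis
    proof (rule set_eqI)
      fix u
      show "u \<in> SS V z d \<longleftrightarrow> u \<in> LL V z (prd d)"
      proof
        assume u: "u \<in> SS V z d"
        then have uV: "u \<in> V" "z u < d" by (auto simp: SS_def)
        show "u \<in> LL V z (prd d)"
        proof (cases "z u \<le> t")
          case True
          then show ?thesis using ge[of t] uV by (auto simp: LL_def)
        next
          case False
          then have "z u \<in> {s\<in>F. s < d}" using uV by (auto simp: F_def)
          then show ?thesis using ge[of "z u"] uV by (auto simp: LL_def)
        qed
      next
        assume "u \<in> LL V z (prd d)"
        then show "u \<in> SS V z d" using Mlt by (auto simp: LL_def SS_def)
      qed
    qed
  qed
  define M where "M = Max (insert t F)"
  have LM: "LL V z M = V"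
  proof -
    have "z u \<le> M" if "u \<in> V" for u
    proof (cases "z u \<le> t")
      case True
      moreover have "t \<le> M" unfolding M_def using finF by (intro Max_ge) auto
      ultimately show ?thesis by simp
    next
      case False
      then have "z u \<in> F" using that by (auto simp: F_def)
      then show ?thesis unfolding M_def using finF by (intro Max_ge) auto
    qed
    then show ?thesis by (auto simp: LL_def)
  qed
  have "(\<Sum>d\<in>F. mult_fin V E z t d) = (\<Sum>d\<in>F. \<phi> (prd d) - \<phi> d)"
  proof (rule sum.cong)
    fix d assume "d \<in> F"
    then show "mult_fin V E z t d = \<phi> (prd d) - \<phi> d"
      unfolding mf_eq[OF ed] \<phi>_def prdp[OF \<open>d \<in> F\<close>] by simp
  qed simp
  also have "\<dots> = \<phi> t - \<phi> M"
    unfolding prd_def M_def by (rule tele[OF finF tF])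
  finally have "(\<Sum>d\<in>F. mult_fin V E z t d) = \<phi> t - \<phi> M" .
  moreover have "mult_inf V E z t = \<phi> M" unfolding mi_eq[OF ed] \<phi>_def LM ..
  ultimately show ?thesis unfolding F_def \<phi>_def by simp
qed

lemma deaths_tele:
  assumes fin: "finite V" and ed: "\<forall>e\<in>E. e \<subseteq> V" and t: "t \<in> z ` V"
  shows "(\<Sum>b\<in>{b\<in>z ` V. b < t}. mult_fin V E z b t)
    = rkS E (SS V z t) (SS V z t) - rkS E (SS V z t) (LL V z t)"
proof -
  define F where "F = {b\<in>z ` V. b < t}"
  have finF: "finite F" using fin by (simp add: F_def)
  have ne: "z ` V \<noteq> {}" using t by blast
  define s0 where "s0 = Min (z ` V) - 1"
  have s0lt: "s0 < z u" if "u \<in> V" for u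
  proof -
    have "Min (z ` V) \<le> z u" using fin that by (intro Min_le) auto
    then show ?thesis by (simp add: s0_def)
  qed
  have tF: "\<forall>d\<in>F. s0 < d" using s0lt by (auto simp: F_def)
  have s0t: "s0 < t" using t s0lt by blast
  define \<psi> where "\<psi> r = rkS E (LL V z r) (SS V z t) - rkS E (LL V z r) (LL V z t)" for r
  define prd where "prd d = Max (insert s0 {s\<in>F. s < d})" for d
  have prdp: "SS V z d = LL V z (prd d)" if "d \<in> F" for d
  proof -
    have fin': "finite (insert s0 {s\<in>F. s < d})" using finF by simp
    have M: "prd d \<in> insert s0 {s\<in>F. s < d}" unfolding prd_def using fin' by (intro Max_in) auto
    have Mlt: "prd d < d" using M that tF by auto
    have ge: "x \<le> prd d" if "x \<in> insert s0 {s\<in>F. s < d}" for x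
      unfolding prd_def using fin' that by (intro Max_ge) auto
    show ?thesis
    proof (rule set_eqI)
      fix u
      show "u \<in> SS V z d \<longleftrightarrow> u \<in> LL V z (prd d)"
      proof
        assume u: "u \<in> SS V z d"
        then have uV: "u \<in> V" "z u < d" by (auto simp: SS_def)
        have "d < t" using that by (simp add: F_def)
        then have "z u \<in> {s\<in>F. s < d}" using uV by (auto simp: F_def)
        then show "u \<in> LL V z (prd d)" using ge[of "z u"] uV by (auto simp: LL_def)
      next
        assume "u \<in> LL V z (prd d)"
        then show "u \<in> SS V z d" using Mlt by (auto simp: LL_def SS_def)
      qed
    qed
  qed
  define M where "M = Max (insert s0 F)"
  have LM: "LL V z M = SS V z t"
  proof -
    have finI: "finite (insert s0 F)" using finF by simp
    have Min': "M \<in> insert s0 F" unfolding M_def using finI by (intro Max_in) auto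
    have Mt: "M < t" using Min' s0t by (auto simp: F_def)
    have "z u \<le> M" if "u \<in> V" "z u < t" for u
    proof -
      have "z u \<in> F" using that by (auto simp: F_def)
      then show ?thesis unfolding M_def using finF by (intro Max_ge) auto
    qed
    then show ?thesis using Mt by (auto simp: LL_def SS_def)
  qed
  have L0: "LL V z s0 = {}" using s0lt by (auto simp: LL_def) (meson not_le)
  have "(\<Sum>b\<in>F. mult_fin V E z b t) = - (\<Sum>b\<in>F. \<psi> (prd b) - \<psi> b)"
  proof -
    have "(\<Sum>b\<in>F. mult_fin V E z b t) = (\<Sum>b\<in>F. - (\<psi> (prd b) - \<psi> b))"
    proof (rule sum.cong)
      fix b assume "b \<in> F"
      then show "mult_fin V E z b t = - (\<psi> (prd b) - \<psi> b)"
        unfolding mf_eq[OF ed] \<psi>_def prdp[OF \<open>b \<in> F\<close>] by simp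
    qed simp
    also have "\<dots> = - (\<Sum>b\<in>F. \<psi> (prd b) - \<psi> b)" by (rule sum_negf)
    finally show ?thesis .
  qed
  also have "(\<Sum>b\<in>F. \<psi> (prd b) - \<psi> b) = \<psi> s0 - \<psi> M"
    unfolding prd_def M_def by (rule tele[OF finF tF])
  finally have "(\<Sum>b\<in>F. mult_fin V E z b t) = \<psi> M - \<psi> s0" by simp
  moreover have "\<psi> s0 = 0" unfolding \<psi>_def L0 by (simp add: rkS_def)
  ultimately show ?thesis unfolding F_def \<psi>_def LM by simp
qed

lemma PH0_insert:
  assumes img: "z' ` V = insert t' (z ` V)" and tn: "t' \<notin> z ` V" and fin: "finite V"
    and mf: "\<forall>b\<in>z ` V. \<forall>d\<in>z ` V. b < d \<longrightarrow> mult_fin V E z' b d = mult_fin V E z b d"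
    and mi: "\<forall>b\<in>z ` V. mult_inf V E z' b = mult_inf V E z b"
    and m1: "\<forall>d\<in>z ` V. t' < d \<longrightarrow> mult_fin V E z' t' d \<le> 0"
    and m2: "\<forall>b\<in>z ` V. b < t' \<longrightarrow> mult_fin V E z' b t' \<le> 0"
    and m3: "mult_inf V E z' t' \<le> 0"
  shows "PH0 V E z' = PH0 V E z"
proof -
  define S where "S = z ` V"
  have finS: "finite S" using fin by (simp add: S_def)
  have tS: "t' \<notin> S" using tn by (simp add: S_def)
  define F where "F zz b d = (if b < d then replicate_mset (nat (mult_fin V E zz b d)) (b, ereal d) else {#})" for zz b d
  define G where "G zz b = replicate_mset (nat (mult_inf V E zz b)) (b, PInfty)" for zz b
  have PH: "PH0 V E zz = (\<Sum>b\<in>zz ` V. \<Sum>d\<in>zz ` V. F zz b d) + (\<Sum>b\<in>zz ` V. G zz b)" for zz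
    unfolding PH0_def F_def G_def ..
  have Ft1: "F z' t' d = {#}" if "d \<in> insert t' S" for d
  proof (cases "t' < d")
    case True
    then have "d \<in> S" using that by auto
    then have "mult_fin V E z' t' d \<le> 0" using m1 True unfolding S_def by blast
    then show ?thesis using True by (simp add: F_def)
  qed (simp add: F_def)
  have Ft2: "F z' b t' = {#}" if "b \<in> S" for b
  proof (cases "b < t'")
    case True
    then have "mult_fin V E z' b t' \<le> 0" using m2 that unfolding S_def by blast
    then show ?thesis using True by (simp add: F_def)
  qed (simp add: F_def)
  have Fbd: "F z' b d = F z b d" if "b \<in> S" "d \<in> S" for b d
  proof -
    have "b < d \<longrightarrow> mult_fin V E z' b d = mult_fin V E z b d" using mf that unfolding S_def by blast
    then show ?thesis by (simp add: F_def)
  qed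
  have Gt: "G z' t' = {#}" using m3 by (simp add: G_def)
  have Gb: "G z' b = G z b" if "b \<in> S" for b
  proof -
    have "mult_inf V E z' b = mult_inf V E z b" using mi that unfolding S_def by blast
    then show ?thesis by (simp add: G_def)
  qed
  have inner: "(\<Sum>d\<in>insert t' S. F z' b d) = (\<Sum>d\<in>S. F z b d)" if "b \<in> S" for b
    using finS tS Ft2[OF that] Fbd[OF that] by (simp add: sum.insert)
  have A: "(\<Sum>b\<in>insert t' S. \<Sum>d\<in>insert t' S. F z' b d) = (\<Sum>b\<in>S. \<Sum>d\<in>S. F z b d)"
  proof -
    have "(\<Sum>b\<in>insert t' S. \<Sum>d\<in>insert t' S. F z' b d)
        = (\<Sum>d\<in>insert t' S. F z' t' d) + (\<Sum>b\<in>S. \<Sum>d\<in>insert t' S. F z' b d)"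
      using finS tS by (rule sum.insert)
    also have "(\<Sum>d\<in>insert t' S. F z' t' d) = 0" using Ft1 by (intro sum.neutral) simp
    also have "(\<Sum>b\<in>S. \<Sum>d\<in>insert t' S. F z' b d) = (\<Sum>b\<in>S. \<Sum>d\<in>S. F z b d)"
      using inner by (rule sum.cong[OF refl])
    finally show ?thesis by simp
  qed
  have B: "(\<Sum>b\<in>insert t' S. G z' b) = (\<Sum>b\<in>S. G z b)"
    using finS tS Gt Gb by (simp add: sum.insert)
  show ?thesis unfolding PH[of z'] PH[of z] img S_def[symmetric] A B ..
qed


lemma up_move:
  assumes fin: "finite V" and ed: "\<forall>e\<in>E. e \<subseteq> V" and v: "v \<in> V" and w: "w \<in> V" "w \<noteq> v"
    and zv: "z v = t" and zw: "z w = t" and g: "good E (LL V z t - {v}) v"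
  shows "\<exists>z'. PH0 V E z' = PH0 V E z \<and> card (z' ` V) = Suc (card (z ` V))"
proof -
  define S where "S = z ` V"
  have finS: "finite S" using fin by (simp add: S_def)
  define tp where "tp = (if {s\<in>S. t < s} = {} then t + 2 else Min {s\<in>S. t < s})"
  have ttp: "t < tp"
  proof (cases "{s\<in>S. t < s} = {}")
    case True then show ?thesis by (simp add: tp_def)
  next
    case False
    then have "Min {s\<in>S. t < s} \<in> {s\<in>S. t < s}" using finS by (intro Min_in) auto
    then show ?thesis using False by (simp add: tp_def)
  qed
  have tpS: "tp \<le> s" if "s \<in> S" "t < s" for s
  proof -
    have "{s\<in>S. t < s} \<noteq> {}" using that by blast
    then have "tp = Min {s\<in>S. t < s}" unfolding tp_def by (rule if_not_P)
    then show ?thesis using finS that by (simp add: Min_le)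
  qed
  define t' where "t' = (t + tp) / 2"
  have t1: "t < t'" "t' < tp" using ttp by (simp_all add: t'_def)
  have gap: "z u \<le> t \<or> t' < z u" if "u \<in> V" for u
  proof (cases "z u \<le> t")
    case False
    then have "tp \<le> z u" using tpS[of "z u"] that by (simp add: S_def)
    then show ?thesis using t1 by simp
  qed simp
  have tn: "t' \<notin> z ` V" using gap t1 by force
  define z' where "z' = z(v := t')"
  define X where "X = LL V z t"
  define W where "W = X - {v}"
  have vX: "v \<in> X" using v zv by (simp add: X_def LL_def)
  have XW: "X = insert v W" using vX by (auto simp: W_def)
  have gW: "good E W v" using g by (simp add: W_def X_def)
  have XV: "X \<subseteq> V" by (auto simp: X_def LL_def)
  have finX: "finite X" using finite_subset[OF XV fin] .
  have img: "z' ` V = insert t' (z ` V)"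
  proof -
    have "z' ` V = insert t' (z ` (V - {v}))" using v by (auto simp: z'_def)
    moreover have "z ` (V - {v}) = z ` V"
    proof
      show "z ` V \<subseteq> z ` (V - {v})"
      proof
        fix y assume "y \<in> z ` V"
        then obtain u where u: "u \<in> V" "y = z u" by blast
        show "y \<in> z ` (V - {v})"
        proof (cases "u = v")
          case True
          then have "y = z w" using u zv zw by simp
          then show ?thesis using w by blast
        next
          case False then show ?thesis using u by blast
        qed
      qed
    qed auto
    ultimately show ?thesis by simp
  qed
  have card: "card (z' ` V) = Suc (card (z ` V))" using img tn fin by simp
  have z'u: "z' u = (if u = v then t' else z u)" for u by (simp add: z'_def)
  have L1: "LL V z' r = LL V z r" if "r \<in> S" "r \<noteq> t" for r
  proof -
    have "r < t \<or> t' < r" using gap[of "SOME u. u \<in> V \<and> z u = r"] that t1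
      by (smt (verit, ccfv_SIG) S_def image_iff someI_ex)
    then show ?thesis using zv t1 by (auto simp: LL_def z'u)
  qed
  have L2: "LL V z' t = W" using t1 zv by (auto simp: LL_def z'u W_def X_def)
  have S1: "SS V z' r = SS V z r" if "r \<in> S" for r
  proof -
    have "r \<le> t \<or> t' < r" using gap[of "SOME u. u \<in> V \<and> z u = r"] that t1
      by (smt (verit, ccfv_SIG) S_def image_iff someI_ex)
    then show ?thesis using zv t1 by (auto simp: SS_def z'u)
  qed
  have L3: "LL V z' t' = X" using t1 zv gap by (force simp: LL_def z'u X_def)
  have S3: "SS V z' t' = W" using t1 zv gap by (force simp: SS_def z'u W_def X_def LL_def)
  have ma: "rkS E A X = rkS E A W" if "A \<subseteq> W" for A
  proof -
    have "finite A" using that finX by (auto simp: W_def intro: finite_subset)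
    then show ?thesis unfolding XW using move_a[OF gW that] by simp
  qed
  have mb: "rkS E W B = rkS E X B" if "X \<subseteq> B" for B
    unfolding XW using move_b[OF gW] that XW by simp
  have subW: "LL V z b \<subseteq> W" "SS V z b \<subseteq> W" if "b < t" for b
    using that zv by (auto simp: LL_def SS_def W_def X_def)
  have SSbW: "SS V z b \<subseteq> W" if "b \<le> t" for b
    using that zv by (auto simp: LL_def SS_def W_def X_def)
  have supX: "X \<subseteq> LL V z d" "X \<subseteq> SS V z d" if "t < d" for d
    using that by (auto simp: LL_def SS_def X_def)
  have mf: "\<forall>b\<in>z ` V. \<forall>d\<in>z ` V. b < d \<longrightarrow> mult_fin V E z' b d = mult_fin V E z b d"
  proof (intro ballI impI)
    fix b d assume bd: "b \<in> z ` V" "d \<in> z ` V" "b < d"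
    then have bS: "b \<in> S" and dS: "d \<in> S" by (simp_all add: S_def)
    show "mult_fin V E z' b d = mult_fin V E z b d"
    proof (cases "b = t")
      case True
      then have "d \<noteq> t" "t < d" using bd by auto
      then show ?thesis unfolding mf_eq[OF ed] using True L2 L1[OF dS] S1[OF bS] S1[OF dS]
          mb[OF supX(1)[OF \<open>t < d\<close>]] mb[OF supX(2)[OF \<open>t < d\<close>]] by (simp add: X_def)
    next
      case False
      note bt = False
      show ?thesis
      proof (cases "d = t")
        case True
        then have "b < t" using bd by simp
        then show ?thesis unfolding mf_eq[OF ed] using True L2 L1[OF bS bt] S1[OF bS] S1[OF dS]
            ma[OF subW(1)[OF \<open>b < t\<close>]] ma[OF subW(2)[OF \<open>b < t\<close>]] by (simp add: X_def)
      next
        case False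
        then show ?thesis unfolding mf_eq[OF ed] using L1[OF bS bt] L1[OF dS False] S1[OF bS] S1[OF dS] by simp
      qed
    qed
  qed
  have mi: "\<forall>b\<in>z ` V. mult_inf V E z' b = mult_inf V E z b"
  proof
    fix b assume "b \<in> z ` V"
    then have bS: "b \<in> S" by (simp add: S_def)
    show "mult_inf V E z' b = mult_inf V E z b"
    proof (cases "b = t")
      case True
      then show ?thesis unfolding mi_eq[OF ed] using L2 S1[OF bS] mb[OF XV] by (simp add: X_def)
    next
      case False
      then show ?thesis unfolding mi_eq[OF ed] using L1[OF bS False] S1[OF bS] by simp
    qed
  qed
  have m1: "\<forall>d\<in>z ` V. t' < d \<longrightarrow> mult_fin V E z' t' d \<le> 0"
  proof (intro ballI impI)
    fix d assume d: "d \<in> z ` V" "t' < d"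
    then have dS: "d \<in> S" and td: "t < d" "d \<noteq> t" using t1 by (auto simp: S_def)
    show "mult_fin V E z' t' d \<le> 0" unfolding mf_eq[OF ed] L3 S3 L1[OF dS td(2)] S1[OF dS]
      using mb[OF supX(1)[OF td(1)]] mb[OF supX(2)[OF td(1)]] by simp
  qed
  have m2: "\<forall>b\<in>z ` V. b < t' \<longrightarrow> mult_fin V E z' b t' \<le> 0"
  proof (intro ballI impI)
    fix b assume b: "b \<in> z ` V" "b < t'"
    then have bS: "b \<in> S" by (simp add: S_def)
    obtain x where x: "x \<in> V" "b = z x" using b(1) by blast
    have bt: "b \<le> t" using gap[OF x(1)] x(2) b(2) by auto
    have "LL V z' b \<subseteq> W"
    proof (cases "b = t")
      case True then show ?thesis using L2 by simp
    next
      case False then show ?thesis using L1[OF bS False] subW(1)[of b] bt by simp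
    qed
    then show "mult_fin V E z' b t' \<le> 0" unfolding mf_eq[OF ed] L3 S3 S1[OF bS]
      using ma[of "LL V z' b"] ma[OF SSbW[OF bt]] by simp
  qed
  have m3: "mult_inf V E z' t' \<le> 0" unfolding mi_eq[OF ed] L3 S3 using mb[OF XV] by simp
  have "PH0 V E z' = PH0 V E z" by (rule PH0_insert[OF img tn fin mf mi m1 m2 m3])
  then show ?thesis using card by blast
qed


lemma down_move:
  assumes fin: "finite V" and ed: "\<forall>e\<in>E. e \<subseteq> V" and v: "v \<in> V" and w: "w \<in> V" "w \<noteq> v"
    and zv: "z v = t" and zw: "z w = t" and g: "good E (SS V z t) v"
  shows "\<exists>z'. PH0 V E z' = PH0 V E z \<and> card (z' ` V) = Suc (card (z ` V))"
proof -
  define S where "S = z ` V"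
  have finS: "finite S" using fin by (simp add: S_def)
  define tm where "tm = (if {s\<in>S. s < t} = {} then t - 2 else Max {s\<in>S. s < t})"
  have ttm: "tm < t"
  proof (cases "{s\<in>S. s < t} = {}")
    case True then show ?thesis by (simp add: tm_def)
  next
    case False
    then have "Max {s\<in>S. s < t} \<in> {s\<in>S. s < t}" using finS by (intro Max_in) auto
    then show ?thesis using False by (simp add: tm_def)
  qed
  have tmS: "s \<le> tm" if "s \<in> S" "s < t" for s
  proof -
    have "{s\<in>S. s < t} \<noteq> {}" using that by blast
    then have "tm = Max {s\<in>S. s < t}" unfolding tm_def by (rule if_not_P)
    then show ?thesis using finS that by (simp add: Max_ge)
  qed
  define t' where "t' = (tm + t) / 2"
  have t1: "tm < t'" "t' < t" using ttm by (simp_all add: t'_def)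
  have gap: "t \<le> z u \<or> z u < t'" if "u \<in> V" for u
  proof (cases "t \<le> z u")
    case False
    then have "z u \<le> tm" using tmS[of "z u"] that by (simp add: S_def)
    then show ?thesis using t1 by simp
  qed simp
  have tn: "t' \<notin> z ` V" using gap t1 by force
  define z' where "z' = z(v := t')"
  define W where "W = SS V z t"
  define X where "X = insert v W"
  have gW: "good E W v" using g by (simp add: W_def)
  have XV: "X \<subseteq> V" using v by (auto simp: X_def W_def SS_def)
  have finX: "finite X" using finite_subset[OF XV fin] .
  have img: "z' ` V = insert t' (z ` V)"
  proof -
    have "z' ` V = insert t' (z ` (V - {v}))" using v by (auto simp: z'_def)
    moreover have "z ` (V - {v}) = z ` V"
    proof
      show "z ` V \<subseteq> z ` (V - {v})"
      proof
        fix y assume "y \<in> z ` V"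
        then obtain u where u: "u \<in> V" "y = z u" by blast
        show "y \<in> z ` (V - {v})"
        proof (cases "u = v")
          case True
          then have "y = z w" using u zv zw by simp
          then show ?thesis using w by blast
        next
          case False then show ?thesis using u by blast
        qed
      qed
    qed auto
    ultimately show ?thesis by simp
  qed
  have card: "card (z' ` V) = Suc (card (z ` V))" using img tn fin by simp
  have z'u: "z' u = (if u = v then t' else z u)" for u by (simp add: z'_def)
  have rS: "t \<le> r \<or> r < t'" if rr: "r \<in> S" for r
  proof -
    obtain u where "u \<in> V" "r = z u" using rr unfolding S_def by blast
    then show ?thesis using gap by blast
  qed
  have L1: "LL V z' r = LL V z r" if "r \<in> S" for r
    using rS[OF that] zv t1 by (auto simp: LL_def z'u)
  have S1: "SS V z' r = SS V z r" if "r \<in> S" "r \<noteq> t" for r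
    using rS[OF that(1)] that(2) zv t1 by (auto simp: SS_def z'u)
  have S2: "SS V z' t = X" using t1 zv v by (auto simp: SS_def z'u X_def W_def)
  have L3: "LL V z' t' = X" using t1 zv gap v by (force simp: LL_def z'u X_def W_def SS_def)
  have S3: "SS V z' t' = W" using t1 zv gap by (force simp: SS_def z'u W_def)
  have ma: "rkS E A X = rkS E A W" if "A \<subseteq> W" for A
  proof -
    have "finite A" using that fin by (auto simp: W_def SS_def intro: finite_subset)
    then show ?thesis unfolding X_def using move_a[OF gW that] by simp
  qed
  have mb: "rkS E W B = rkS E X B" if "X \<subseteq> B" for B
    unfolding X_def using move_b[OF gW] that X_def by simp
  have subW: "LL V z b \<subseteq> W" "SS V z b \<subseteq> W" if "b < t" for b
    using that by (auto simp: LL_def SS_def W_def)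
  have supX: "X \<subseteq> LL V z d" if "t \<le> d" for d
    using that zv v by (auto simp: LL_def SS_def X_def W_def)
  have supX2: "X \<subseteq> SS V z d" if "t < d" for d
    using that zv v by (auto simp: SS_def X_def W_def)
  have mf: "\<forall>b\<in>z ` V. \<forall>d\<in>z ` V. b < d \<longrightarrow> mult_fin V E z' b d = mult_fin V E z b d"
  proof (intro ballI impI)
    fix b d assume bd: "b \<in> z ` V" "d \<in> z ` V" "b < d"
    then have bS: "b \<in> S" and dS: "d \<in> S" by (simp_all add: S_def)
    show "mult_fin V E z' b d = mult_fin V E z b d"
    proof (cases "b = t")
      case True
      then have "d \<noteq> t" "t < d" using bd by auto
      then show ?thesis unfolding mf_eq[OF ed] using True S2 L1[OF dS] L1[OF bS] S1[OF dS \<open>d \<noteq> t\<close>]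
          mb[OF supX[of d]] mb[OF supX2[OF \<open>t < d\<close>]] by (simp add: W_def)
    next
      case False
      note bt = False
      show ?thesis
      proof (cases "d = t")
        case True
        then have "b < t" using bd by simp
        then show ?thesis unfolding mf_eq[OF ed] using True S2 L1[OF bS] L1[OF dS] S1[OF bS bt]
            ma[OF subW(1)[OF \<open>b < t\<close>]] ma[OF subW(2)[OF \<open>b < t\<close>]] by (simp add: W_def)
      next
        case False
        then show ?thesis unfolding mf_eq[OF ed] using L1[OF bS] L1[OF dS] S1[OF bS bt] S1[OF dS False] by simp
      qed
    qed
  qed
  have mi: "\<forall>b\<in>z ` V. mult_inf V E z' b = mult_inf V E z b"
  proof
    fix b assume "b \<in> z ` V"
    then have bS: "b \<in> S" by (simp add: S_def)
    show "mult_inf V E z' b = mult_inf V E z b"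
    proof (cases "b = t")
      case True
      then show ?thesis unfolding mi_eq[OF ed] using S2 L1[OF bS] mb[OF XV] by (simp add: W_def)
    next
      case False
      then show ?thesis unfolding mi_eq[OF ed] using L1[OF bS] S1[OF bS False] by simp
    qed
  qed
  have m1: "\<forall>d\<in>z ` V. t' < d \<longrightarrow> mult_fin V E z' t' d \<le> 0"
  proof (intro ballI impI)
    fix d assume d: "d \<in> z ` V" "t' < d"
    then have dS: "d \<in> S" by (simp add: S_def)
    then have td: "t \<le> d" using rS[OF dS] d(2) by auto
    have "X \<subseteq> SS V z' d"
    proof (cases "d = t")
      case True then show ?thesis using S2 by simp
    next
      case False then show ?thesis using S1[OF dS False] supX2[of d] td by simp
    qed
    then show "mult_fin V E z' t' d \<le> 0" unfolding mf_eq[OF ed] L3 S3 L1[OF dS]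
      using mb[of "SS V z' d"] mb[OF supX[OF td]] by simp
  qed
  have m2: "\<forall>b\<in>z ` V. b < t' \<longrightarrow> mult_fin V E z' b t' \<le> 0"
  proof (intro ballI impI)
    fix b assume b: "b \<in> z ` V" "b < t'"
    then have bS: "b \<in> S" by (simp add: S_def)
    have bt: "b < t" using b(2) t1 by simp
    then have bnt: "b \<noteq> t" by simp
    show "mult_fin V E z' b t' \<le> 0" unfolding mf_eq[OF ed] L3 S3 L1[OF bS] S1[OF bS bnt]
      using ma[OF subW(1)[OF bt]] ma[OF subW(2)[OF bt]] by simp
  qed
  have m3: "mult_inf V E z' t' \<le> 0" unfolding mi_eq[OF ed] L3 S3 using mb[OF XV] by simp
  have "PH0 V E z' = PH0 V E z" by (rule PH0_insert[OF img tn fin mf mi m1 m2 m3])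
  then show ?thesis using card by blast
qed

lemma edges_in:
  assumes "is_ngon N E \<or> is_starlike N E"
  shows "\<forall>e\<in>E. e \<subseteq> {1..N}"
  using assms
proof
  assume "is_ngon N E"
  then have "N \<ge> 3" "E = ngon_edges N" by (auto simp: is_ngon_def)
  then show ?thesis by (auto simp: ngon_edges_def)
next
  assume "is_starlike N E"
  then obtain c bs where c: "c \<in> {1..N}" and V: "{1..N} = insert c (\<Union>b\<in>set bs. set b)"
    and E: "E = (\<Union>b\<in>set bs. branch_edges c b)"
    unfolding is_starlike_def by blast
  show ?thesis
  proof
    fix e assume "e \<in> E"
    then obtain b where b: "b \<in> set bs" "e \<in> branch_edges c b" using E by blast
    then obtain x y where xy: "(x,y) \<in> set (zip (c # b) b)" "e = {x,y}"
      by (auto simp: branch_edges_def)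
    have "x \<in> set (c # b)" using xy(1) by (rule set_zip_leftD)
    moreover have "y \<in> set b" using xy(1) by (rule set_zip_rightD)
    ultimately have "x \<in> {1..N}" "y \<in> {1..N}" using V b(1) by auto
    then show "e \<subseteq> {1..N}" using xy(2) by simp
  qed
qed

lemma main:
  assumes fin: "finite V" and ed: "\<forall>e\<in>E. e \<subseteq> V"
  shows "n = card V - card (z ` V) \<Longrightarrow> typical_diagram (PH0 V E z) \<Longrightarrow>
    \<exists>z'. inj_on z' V \<and> PH0 V E z' = PH0 V E z"
proof (induction n arbitrary: z rule: less_induct)
  case (less n)
  show ?case
  proof (cases "inj_on z V")
    case True then show ?thesis by blast
  next
    case False
    then obtain a b where ab: "a \<in> V" "b \<in> V" "a \<noteq> b" "z a = z b" unfolding inj_on_def by blast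
    define t where "t = z a"
    define X where "X = LL V z t"
    define Z where "Z = SS V z t"
    have ZX: "Z \<subseteq> X" by (auto simp: X_def Z_def LL_def SS_def)
    have finX: "finite X" using fin by (simp add: X_def LL_def)
    have aX: "a \<in> X" "a \<notin> Z" "b \<in> X" "b \<notin> Z" using ab by (auto simp: X_def Z_def LL_def SS_def t_def)
    have tS: "t \<in> z ` V" using ab by (simp add: t_def)
    have "count (diag_coords (PH0 V E z)) t \<le> 1" using less.prems(2) by (simp add: typical_diagram_def)
    then have "int (count (diag_coords (PH0 V E z)) t) \<le> 1" by simp
    then have ev: "(int (card (cc E X ` X)) - int (card (cc E X ` Z)))
           + (int (card (cc E Z ` Z)) - int (card (cc E X ` Z))) \<le> 1"
      using count_PH0_ge[OF fin tS, of E] births_tele[OF fin ed tS] deaths_tele[OF fin ed tS]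
      unfolding X_def Z_def rkS_def by linarith
    obtain v where v: "v \<in> X - Z" and gv: "good E (X - {v}) v \<or> good E Z v"
      using comb[OF finX ZX aX ab(3) ev] by blast
    have vV: "v \<in> V" and zv: "z v = t" using v by (auto simp: X_def Z_def LL_def SS_def)
    define w where "w = (if v = a then b else a)"
    have w: "w \<in> V" "w \<noteq> v" "z w = t" using ab by (auto simp: w_def t_def)
    obtain z2 where z2: "PH0 V E z2 = PH0 V E z" "card (z2 ` V) = Suc (card (z ` V))"
      using gv up_move[OF fin ed vV w(1,2) zv w(3)] down_move[OF fin ed vV w(1,2) zv w(3)]
      unfolding X_def Z_def by blast
    have "card (z ` V) < card V"
    proof -
      have "card (z ` V) \<le> card V" by (rule card_image_le[OF fin])
      moreover have "card (z ` V) \<noteq> card V" using False fin by (simp add: inj_on_iff_eq_card)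
      ultimately show ?thesis by simp
    qed
    then have lt: "card V - card (z2 ` V) < n" using z2(2) less.prems(1) by simp
    have "typical_diagram (PH0 V E z2)" using z2(1) less.prems(2) by simp
    then obtain z' where "inj_on z' V" "PH0 V E z' = PH0 V E z2" using less.IH[OF lt refl] by blast
    then show ?thesis using z2(1) by auto
  qed
qed

theorem lemma1p1:
  fixes N :: nat and E :: "nat set set" and z :: "nat \<Rightarrow> real"
  assumes "is_ngon N E \<or> is_starlike N E"
    and "typical_diagram (PH0 {1..N} E z)"
  shows "\<exists>z' :: nat \<Rightarrow> real. typical_point N z' \<and> PH0 {1..N} E z' = PH0 {1..N} E z"
proof -
  have ed: "\<forall>e\<in>E. e \<subseteq> {1..N}" using edges_in[OF assms(1)] .
  from main[OF _ ed refl assms(2)] show ?thesis by (simp add: typical_point_def)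
qed

end
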